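(* Let $H\in\mathbb{C}^{2N\times2N}$ be Hermitian and let $\mathbb{K}$ be the kernel of $H_\ominus$. Then $\mathbb{K}$ is $J$-invariant, $\dim\mathbb{K}=2l$ is even, $\mathbb{K}$ admits an orthogonal basis $\mathbf{y}_1,\dots,\mathbf{y}_{2l}$ of nonzero vectors with $J(\mathbf{y}_k)=\mathbf{y}_k$ for all $k$, and $\mathbb{K}$ admits an orthonormal basis of the form $\{\mathbf{k}'_1,\dots,\mathbf{k}'_l,J(\mathbf{k}'_1),\dots,J(\mathbf{k}'_l)\}$. Consequently $\mathbb{C}^{2N}$ has an orthonormal basis of eigenvectors of $H_\ominus$ of the form $\{\mathbf{x}_1,\dots,\mathbf{x}_N,J(\mathbf{x}_1),\dots,J(\mathbf{x}_N)\}$ in which every $\mathbf{x}_j$ has eigenvalue $\le 0$.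
   Context: $\Omega=\begin{pmatrix}0&I_N\\ I_N&0\end{pmatrix}\in\mathbb{C}^{2N\times2N}$. $J:\mathbb{C}^{2N}\to\mathbb{C}^{2N}$ is the antilinear map $J(\mathbf{x})=\Omega\mathbf{x}^*$ ($^*$ = entrywise complex conjugation). For a matrix $M$, $M_\ominus:=\tfrac12(M-\Omega M^{\mathrm T}\Omega)$. $\langle\mathbf{x},\mathbf{y}\rangle=\sum_k x_k^*y_k$. *)

theory Defs
  imports "HOL-Analysis.Analysis"
begin

text \<open>Index set of \<open>C^{2N}\<close>: the type \<open>'n + 'n\<close> with \<open>CARD('n) = N\<close>;
  coordinate \<open>Inl k\<close> is the k-th of the first N coordinates, \<open>Inr k\<close> the k-th of the last N.\<close>

fun swp :: "'n + 'n \<Rightarrow> 'n + 'n" where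
  "swp (Inl a) = Inr a"
| "swp (Inr a) = Inl a"

text \<open>\<open>\<Omega> = [[0, I],[I, 0]]\<close>.\<close>
definition Omega :: "complex ^ ('n::finite + 'n) ^ ('n + 'n)" where
  "Omega = (\<chi> i j. if j = swp i then 1 else 0)"

definition cvec_cnj :: "complex ^ 'm \<Rightarrow> complex ^ 'm" where
  "cvec_cnj x = (\<chi> i. cnj (x $ i))"

definition Jmap :: "complex ^ ('n::finite + 'n) \<Rightarrow> complex ^ ('n + 'n)" where
  "Jmap x = Omega *v cvec_cnj x"

definition minus_part :: "complex ^ ('n::finite + 'n) ^ ('n + 'n) \<Rightarrow> complex ^ ('n + 'n) ^ ('n + 'n)" where
  "minus_part M = (\<chi> i j. (M $ i $ j - (Omega ** transpose M ** Omega) $ i $ j) / 2)"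

definition cinner :: "complex ^ 'm::finite \<Rightarrow> complex ^ 'm \<Rightarrow> complex" where
  "cinner x y = (\<Sum>k\<in>UNIV. cnj (x $ k) * y $ k)"

definition hermitian_mat :: "complex ^ 'm ^ 'm \<Rightarrow> bool" where
  "hermitian_mat H \<longleftrightarrow> (\<forall>i j. H $ i $ j = cnj (H $ j $ i))"

definition ker_mat :: "complex ^ 'm::finite ^ 'm \<Rightarrow> (complex ^ 'm) set" where
  "ker_mat M = {x. M *v x = 0}"

end

theory Submission
  imports Defs
begin

lemma swp_swp[simp]: "swp (swp i) = i" by (cases i) auto

lemma swp_eq_iff: "swp i = j \<longleftrightarrow> i = swp j" by (cases i; cases j) auto

lemma sum_swp: "(\<Sum>k\<in>UNIV. f (swp k)) = (\<Sum>k\<in>UNIV. f k)"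
  by (rule sum.reindex_bij_witness[where i=swp and j=swp]) auto

lemma if01_mult: "(if P then 1 else 0) * (a::complex) = (if P then a else 0)" by simp
lemma if01_mult': "(a::complex) * (if P then 1 else 0) = (if P then a else 0)" by simp
lemma eq_swp_iff: "(j = swp n) = (n = swp j)" by (cases j; cases n) auto

lemma Jmap_nth: "Jmap x $ i = cnj (x $ swp i)"
  unfolding Jmap_def Omega_def cvec_cnj_def matrix_vector_mult_def
  by (simp add: if01_mult)

lemma minus_part_nth: "minus_part M $ i $ j = (M$i$j - M $ swp j $ swp i)/2"
  unfolding minus_part_def Omega_def matrix_matrix_mult_def transpose_def
  by (simp add: if01_mult if01_mult' eq_swp_iff sum_distrib_right)

lemma cinner_add_left: "cinner (x + y) z = cinner x z + cinner y z"
  unfolding cinner_def by (simp add: distrib_right sum.distrib)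
lemma cinner_add_right: "cinner z (x + y) = cinner z x + cinner z y"
  unfolding cinner_def by (simp add: distrib_left sum.distrib)
lemma cinner_diff_left: "cinner (x - y) z = cinner x z - cinner y z"
  unfolding cinner_def by (simp add: left_diff_distrib sum_subtractf)
lemma cinner_diff_right: "cinner z (x - y) = cinner z x - cinner z y"
  unfolding cinner_def by (simp add: right_diff_distrib sum_subtractf)
lemma cinner_scale_left: "cinner (c *s x) y = cnj c * cinner x y"
  unfolding cinner_def by (simp add: sum_distrib_left mult.assoc)
lemma cinner_scale_right: "cinner x (c *s y) = c * cinner x y"
  unfolding cinner_def by (simp add: sum_distrib_left mult.left_commute)
lemma cinner_neg_left: "cinner (- x) y = - cinner x y"
  unfolding cinner_def by (simp add: sum_negf)
lemma cinner_neg_right: "cinner x (- y) = - cinner x y"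
  unfolding cinner_def by (simp add: sum_negf)
lemma cinner_zero_left[simp]: "cinner 0 y = 0" unfolding cinner_def by simp
lemma cinner_zero_right[simp]: "cinner x 0 = 0" unfolding cinner_def by simp
lemma cinner_sum_right: "finite S \<Longrightarrow> cinner x (\<Sum>i\<in>S. f i) = (\<Sum>i\<in>S. cinner x (f i))"
  by (induction S rule: finite_induct) (auto simp: cinner_add_right)
lemma cinner_sum_left: "finite S \<Longrightarrow> cinner (\<Sum>i\<in>S. f i) x = (\<Sum>i\<in>S. cinner (f i) x)"
  by (induction S rule: finite_induct) (auto simp: cinner_add_left)
lemma cinner_commute: "cinner x y = cnj (cinner y x)"
  unfolding cinner_def by (simp add: mult.commute)
lemma cinner_self: "cinner x x = complex_of_real ((norm x)^2)"
proof -
  have "cinner x x = (\<Sum>k\<in>UNIV. complex_of_real ((norm (x$k))^2))"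
    unfolding cinner_def by (intro sum.cong refl) (subst complex_norm_square, simp add: mult.commute)
  also have "\<dots> = complex_of_real (\<Sum>k\<in>UNIV. (norm (x$k))^2)"
    by (simp only: of_real_sum)
  also have "(\<Sum>k\<in>UNIV. (norm (x$k))^2) = (norm x)^2"
    unfolding norm_vec_def L2_set_def by (rule real_sqrt_pow2[symmetric]) (simp add: sum_nonneg)
  finally show ?thesis .
qed
lemma cinner_self_eq_0: "cinner x x = 0 \<longleftrightarrow> x = 0"
  by (simp add: cinner_self)

lemma Jmap_add: "Jmap (x + y) = Jmap x + Jmap y" by (simp add: vec_eq_iff Jmap_nth)
lemma Jmap_diff: "Jmap (x - y) = Jmap x - Jmap y" by (simp add: vec_eq_iff Jmap_nth)
lemma Jmap_neg: "Jmap (- x) = - Jmap x" by (simp add: vec_eq_iff Jmap_nth)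
lemma Jmap_scale: "Jmap (c *s x) = cnj c *s Jmap x" by (simp add: vec_eq_iff Jmap_nth)
lemma Jmap_Jmap[simp]: "Jmap (Jmap x) = x" by (simp add: vec_eq_iff Jmap_nth)
lemma Jmap_zero[simp]: "Jmap 0 = 0" by (simp add: vec_eq_iff Jmap_nth)
lemma Jmap_eq_0_iff[simp]: "Jmap x = 0 \<longleftrightarrow> x = 0" by (metis Jmap_Jmap Jmap_zero)
lemma cinner_Jmap: "cinner (Jmap x) (Jmap y) = cinner y x"
proof -
  have "cinner (Jmap x) (Jmap y) = (\<Sum>k\<in>UNIV. (\<lambda>k. cnj (y$k) * x$k) (swp k))"
    unfolding cinner_def Jmap_nth by (simp add: mult.commute)
  also have "\<dots> = cinner y x" unfolding cinner_def by (rule sum_swp)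
  finally show ?thesis .
qed

lemma hermD: "hermitian_mat H \<Longrightarrow> cnj (H$i$j) = H$j$i"
  unfolding hermitian_mat_def by (metis complex_cnj_cnj)

lemma herm_minus_part: assumes "hermitian_mat H" shows "hermitian_mat (minus_part H)"
  unfolding hermitian_mat_def minus_part_nth
  by (simp add: hermD[OF assms])

lemma cinner_herm: assumes "hermitian_mat A" shows "cinner (A *v x) y = cinner x (A *v y)"
proof -
  have "cinner (A *v x) y = (\<Sum>k\<in>UNIV. \<Sum>j\<in>UNIV. cnj (A$k$j) * cnj (x$j) * y$k)"
    unfolding cinner_def matrix_vector_mult_def by (simp add: sum_distrib_right)
  also have "\<dots> = (\<Sum>j\<in>UNIV. \<Sum>k\<in>UNIV. cnj (x$j) * (A$j$k * y$k))"
    by (subst sum.swap) (auto simp: hermD[OF assms] mult_ac intro!: sum.cong)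
  also have "\<dots> = cinner x (A *v y)"
    unfolding cinner_def matrix_vector_mult_def by (simp add: sum_distrib_left)
  finally show ?thesis .
qed

lemma minus_part_Jmap: assumes "hermitian_mat H"
  shows "minus_part H *v Jmap x = - Jmap (minus_part H *v x)"
proof -
  have e: "minus_part H $ i $ j = - cnj (minus_part H $ swp i $ swp j)" for i j
    unfolding minus_part_nth by (simp add: hermD[OF assms] field_simps)
  show ?thesis
  unfolding vec_eq_iff
  proof
    fix i
    have "(minus_part H *v Jmap x) $ i = (\<Sum>j\<in>UNIV. (\<lambda>j. - cnj (minus_part H $ swp i $ j) * cnj (x $ j)) (swp j))"
      unfolding matrix_vector_mult_def Jmap_nth by (simp add: e[of i])
    also have "\<dots> = (\<Sum>j\<in>UNIV. - cnj (minus_part H $ swp i $ j) * cnj (x $ j))"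
      by (rule sum_swp)
    also have "\<dots> = (- Jmap (minus_part H *v x)) $ i"
      by (simp add: matrix_vector_mult_def Jmap_nth sum_negf)
    finally show "(minus_part H *v Jmap x) $ i = (- Jmap (minus_part H *v x)) $ i" .
  qed
qed

definition Wp :: "(complex^'m::finite) set \<Rightarrow> (complex^'m) set" where
  "Wp B = {v. \<forall>b\<in>B. cinner b v = 0}"

definition qf :: "complex^'m::finite^'m \<Rightarrow> complex^'m \<Rightarrow> real" where
  "qf A v = Re (cinner v (A *v v))"

lemma Wp_comb: "u \<in> Wp B \<Longrightarrow> v \<in> Wp B \<Longrightarrow> u + c *s v \<in> Wp B"
  unfolding Wp_def by (simp add: cinner_add_right cinner_scale_right)

lemma Wp_scale: "v \<in> Wp B \<Longrightarrow> c *s v \<in> Wp B"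
  unfolding Wp_def by (simp add: cinner_scale_right)

lemma Wp_zero[simp]: "0 \<in> Wp B" unfolding Wp_def by simp

lemma Wp_diff: "u \<in> Wp B \<Longrightarrow> v \<in> Wp B \<Longrightarrow> u - v \<in> Wp B"
  unfolding Wp_def by (simp add: cinner_diff_right)

lemma closed_Wp: "closed (Wp B)"
proof -
  have "Wp B = (\<Inter>b\<in>B. {v. cinner b v = 0})" unfolding Wp_def by auto
  moreover have "closed {v. cinner b v = 0}" for b :: "complex^'a"
    by (rule closed_Collect_eq) (auto simp: cinner_def intro!: continuous_intros)
  ultimately show ?thesis by auto
qed

lemma Wp_J: assumes "\<And>b. b \<in> B \<Longrightarrow> Jmap b \<in> B" "v \<in> Wp B" shows "Jmap v \<in> Wp B"
  unfolding Wp_def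
proof safe
  fix b assume b: "b \<in> B"
  have "cinner b (Jmap v) = cinner (Jmap (Jmap b)) (Jmap v)" by simp
  also have "\<dots> = cinner v (Jmap b)" by (rule cinner_Jmap)
  also have "\<dots> = cnj (cinner (Jmap b) v)" by (rule cinner_commute)
  also have "cinner (Jmap b) v = 0" using assms b unfolding Wp_def by auto
  finally show "cinner b (Jmap v) = 0" by simp
qed

lemma Wp_A: assumes "hermitian_mat A" "\<And>b. b \<in> B \<Longrightarrow> \<exists>\<mu>::real. A *v b = complex_of_real \<mu> *s b"
  "v \<in> Wp B" shows "A *v v \<in> Wp B"
  unfolding Wp_def
proof safe
  fix b assume b: "b \<in> B"
  then obtain \<mu> :: real where mu: "A *v b = complex_of_real \<mu> *s b" using assms by blast
  have "cinner b (A *v v) = cinner (A *v b) v" by (rule cinner_herm[OF assms(1), symmetric])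
  also have "\<dots> = complex_of_real \<mu> * cinner b v" by (simp add: mu cinner_scale_left)
  also have "cinner b v = 0" using assms b unfolding Wp_def by auto
  finally show "cinner b (A *v v) = 0" by simp
qed

lemma herm_real: assumes "hermitian_mat A" shows "cinner v (A *v v) = complex_of_real (qf A v)"
proof -
  have h: "cnj (cinner v (A *v v)) = cinner v (A *v v)"
    by (metis cinner_commute cinner_herm[OF assms])
  have "Im (cinner v (A *v v)) = 0" using arg_cong[OF h, of Im] by simp
  then show ?thesis unfolding qf_def by (simp add: complex_eq_iff)
qed

lemma cinner_self_real: "cinner v v = complex_of_real (Re (cinner v v))"
  by (simp add: cinner_self)

lemma qf_scale: "qf A (c *s v) = (cmod c)^2 * qf A v"
proof -
  have "cinner (c *s v) (A *v (c *s v)) = (cnj c * c) * cinner v (A *v v)"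
    by (simp add: vec.scale cinner_scale_left cinner_scale_right)
  also have "cnj c * c = complex_of_real ((cmod c)^2)"
    using complex_norm_square[of c] by (simp add: mult.commute)
  finally show ?thesis unfolding qf_def by simp
qed

lemma qf_Jmap: assumes "hermitian_mat A" "\<And>x. A *v Jmap x = - Jmap (A *v x)"
  shows "qf A (Jmap v) = - qf A v"
proof -
  have "cinner (Jmap v) (A *v Jmap v) = - cinner (Jmap v) (Jmap (A *v v))"
    by (simp add: assms(2) cinner_neg_right)
  also have "\<dots> = - cinner (A *v v) v" by (simp add: cinner_Jmap)
  also have "\<dots> = - cinner v (A *v v)" by (simp add: cinner_herm[OF assms(1)])
  finally show ?thesis unfolding qf_def by simp
qed

lemma add_neg_scale: "u + (- c) *s v = u - c *s (v::'a::comm_ring_1^'m)"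
  by (simp add: vec_eq_iff)

lemma e1_lemma:
  fixes A :: "complex^'m::finite^'m"
  assumes d_def: "d = A *v x - complex_of_real M *s x" and Bd_def: "Bd = A *v d - complex_of_real M *s d"
   and z_def: "z = x + complex_of_real t *s d"
  shows "A *v z - complex_of_real M *s z = d + complex_of_real t *s Bd"
proof -
    have "A *v z - complex_of_real M *s z = (A *v x - complex_of_real M *s x) + complex_of_real t *s (A *v d - complex_of_real M *s d)"
      unfolding z_def by (simp add: vec.add vec.scale vec_eq_iff algebra_simps)
    thus "A *v z - complex_of_real M *s z = d + complex_of_real t *s Bd"
      unfolding Bd_def d_def[symmetric] .
qed

lemma expand_lemma:
  "cinner (x + complex_of_real t *s d) (d + complex_of_real t *s Bd)
        = cinner x d + complex_of_real t * cinner x Bd + complex_of_real t * cinner d d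
          + complex_of_real t * complex_of_real t * cinner d Bd"
  unfolding cinner_add_left cinner_add_right cinner_scale_left cinner_scale_right
  by (simp add: ring_distribs)

lemma real_quad: assumes key: "\<And>t::real. 2*t*a + t^2*c \<le> 0" and a: "a \<ge> 0" shows "a = 0"
  proof (rule ccontr)
    assume "a \<noteq> 0"
    hence apos: "a > 0" using a by simp
    define t where "t = a / (\<bar>c\<bar> + 1)"
    have tpos: "t > 0" unfolding t_def using apos by simp
    have eq: "t * (2 * a + t * c) = 2*t*a + t^2*c" by (simp add: power2_eq_square algebra_simps)
    have h1: "2 * a + t * c \<le> 0"
    proof (rule ccontr)
      assume "\<not> 2 * a + t * c \<le> 0"
      hence "t * (2 * a + t * c) > 0" using tpos by simp
      thus False using key[of t] eq by linarith
    qed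
    have "t * \<bar>c\<bar> < a"
    proof -
      have "t * \<bar>c\<bar> = a * (\<bar>c\<bar> / (\<bar>c\<bar> + 1))" unfolding t_def by simp
      also have "\<bar>c\<bar> / (\<bar>c\<bar> + 1) < 1" by simp
      hence "a * (\<bar>c\<bar> / (\<bar>c\<bar> + 1)) < a * 1" using apos by (intro mult_strict_left_mono) auto
      finally show ?thesis by simp
    qed
    moreover have "t * (- \<bar>c\<bar>) \<le> t * c" using tpos by (intro mult_left_mono) auto
    ultimately show False using h1 apos by linarith
  qed

lemma eig_from_max:
  assumes hA: "hermitian_mat A"
    and Winv: "\<And>v. v \<in> W \<Longrightarrow> A *v v \<in> W"
    and Wc: "\<And>u v c. u \<in> W \<Longrightarrow> v \<in> W \<Longrightarrow> u + c *s v \<in> W"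
    and xW: "x \<in> W" and nx: "cinner x x = 1"
    and mx: "\<And>y. y \<in> W \<Longrightarrow> qf A y \<le> qf A x * Re (cinner y y)"
  shows "A *v x = complex_of_real (qf A x) *s x"
proof -
  define M where "M = qf A x"
  define d where "d = A *v x - complex_of_real M *s x"
  define Bd where "Bd = A *v d - complex_of_real M *s d"
  have dW: "d \<in> W" using Wc[OF Winv[OF xW] xW, of "- complex_of_real M"] unfolding d_def
    by (simp add: add_neg_scale)
  have xAx: "cinner x (A *v x) = complex_of_real M" using herm_real[OF hA] M_def by simp
  have cxd: "cinner x d = 0" unfolding d_def by (simp add: cinner_diff_right cinner_scale_right xAx nx)
  have dd: "cinner d d = cinner (A *v x - complex_of_real M *s x) d" by (simp only: d_def[symmetric])
  have e2: "cinner x Bd = cinner d d"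
  proof -
    have "cinner x (A *v d) = cinner (A *v x) d" by (rule cinner_herm[OF hA, symmetric])
    then show ?thesis unfolding Bd_def dd
      by (simp add: cinner_diff_left cinner_diff_right cinner_scale_left cinner_scale_right cxd)
  qed
  define c where "c = Re (cinner d Bd)"
  define a where "a = (norm d)^2"
  have dda: "cinner d d = complex_of_real a" unfolding a_def by (rule cinner_self)
  have key: "2 * t * a + t^2 * c \<le> 0" for t :: real
  proof -
    define z where "z = x + complex_of_real t *s d"
    have zW: "z \<in> W" using Wc[OF xW dW] z_def by simp
    have "qf A z \<le> M * Re (cinner z z)" using mx[OF zW] M_def by simp
    hence le: "Re (cinner z (A *v z - complex_of_real M *s z)) \<le> 0"
      by (simp add: cinner_diff_right cinner_scale_right qf_def)
    have e1: "A *v z - complex_of_real M *s z = d + complex_of_real t *s Bd"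
      by (rule e1_lemma[OF d_def Bd_def z_def])
    have "cinner z (A *v z - complex_of_real M *s z)
        = cinner x d + complex_of_real t * cinner x Bd + complex_of_real t * cinner d d
          + complex_of_real t * complex_of_real t * cinner d Bd"
      unfolding e1 unfolding z_def by (rule expand_lemma)
    also have "\<dots> = complex_of_real (2 * t * a) + complex_of_real (t^2) * cinner d Bd"
      by (simp add: cxd e2 dda power2_eq_square)
    finally have "Re (cinner z (A *v z - complex_of_real M *s z)) = 2 * t * a + t^2 * c"
      unfolding c_def by simp
    with le show ?thesis by simp
  qed
  have a0: "a = 0" using key by (rule real_quad) (simp add: a_def)
  hence "d = 0" unfolding a_def by simp
  thus ?thesis unfolding d_def M_def by simp
qed

lemma norm_eq_1_cinner: "norm v = 1 \<longleftrightarrow> cinner v v = 1"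
proof -
  have "cinner v v = 1 \<longleftrightarrow> (norm v)^2 = 1" by (simp only: cinner_self of_real_eq_1_iff)
  also have "\<dots> \<longleftrightarrow> norm v = 1" by (simp add: power2_eq_1_iff) (use norm_ge_zero[of v] in linarith)
  finally show ?thesis by simp
qed

lemma qf_scale_real: "qf A (complex_of_real r *s v) = r^2 * qf A v"
  by (simp add: qf_scale)

lemma qf_zero[simp]: "qf A 0 = 0" unfolding qf_def by simp

lemma norm_scale_real: "norm (complex_of_real r *s v) = \<bar>r\<bar> * norm v"
proof -
  have f: "cinner (complex_of_real r *s v) (complex_of_real r *s v) = complex_of_real r * complex_of_real r * cinner v v"
    by (simp add: cinner_scale_left cinner_scale_right)
  have "complex_of_real ((norm (complex_of_real r *s v))^2) = complex_of_real (r * r * (norm v)^2)"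
    using f by (simp only: cinner_self of_real_mult)
  hence "(norm (complex_of_real r *s v))^2 = r * r * (norm v)^2" by (simp only: of_real_eq_iff)
  hence "(norm (complex_of_real r *s v))^2 = (\<bar>r\<bar> * norm v)^2" by (simp add: power2_eq_square)
  thus ?thesis by (simp add: power2_eq_iff_nonneg)
qed

lemma exists_pos_eig:
  assumes hA: "hermitian_mat A"
    and Winv: "\<And>v. v \<in> Wp B \<Longrightarrow> A *v v \<in> Wp B"
    and v0: "v0 \<in> Wp B" and q0: "qf A v0 > 0"
  shows "\<exists>x\<in>Wp B. cinner x x = 1 \<and> (\<exists>M::real. M > 0 \<and> A *v x = complex_of_real M *s x)"
proof -
  define S where "S = Wp B \<inter> sphere 0 1"
  have cS: "compact S" unfolding S_def compact_eq_bounded_closed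
    by (auto intro: closed_Wp bounded_subset[OF bounded_sphere])
  have v0n: "v0 \<noteq> 0" using q0 by auto
  define u0 where "u0 = complex_of_real (1 / norm v0) *s v0"
  have u0S: "u0 \<in> S" unfolding S_def u0_def using v0 v0n norm_scale_real[of "1 / norm v0" v0]
    by (auto simp: Wp_scale)
  have cont: "continuous_on S (qf A)"
  proof -
    have "continuous_on UNIV (qf A)"
      unfolding qf_def cinner_def matrix_vector_mult_def by (simp, intro continuous_intros)
    thus ?thesis by (rule continuous_on_subset) simp
  qed
  obtain x where xS: "x \<in> S" and xmax: "\<And>y. y \<in> S \<Longrightarrow> qf A y \<le> qf A x"
    using continuous_attains_sup[OF cS _ cont] u0S by blast
  have xW: "x \<in> Wp B" and nx: "cinner x x = 1" using xS unfolding S_def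
    by (auto simp: norm_eq_1_cinner)
  have mx: "qf A y \<le> qf A x * Re (cinner y y)" if yW: "y \<in> Wp B" for y
  proof (cases "y = 0")
    case True then show ?thesis by simp
  next
    case False
    define r where "r = 1 / norm y"
    have "complex_of_real r *s y \<in> S" unfolding S_def r_def using yW False norm_scale_real[of "1 / norm y" y]
      by (auto simp: Wp_scale)
    hence "r^2 * qf A y \<le> qf A x" using xmax qf_scale_real by metis
    moreover have "r^2 * (norm y)^2 = 1" unfolding r_def using False by (simp add: power_divide)
    ultimately have "qf A y \<le> qf A x * (norm y)^2"
    proof -
      assume h: "r^2 * qf A y \<le> qf A x" and n: "r^2 * (norm y)^2 = 1"
      have "qf A y = (r^2 * qf A y) * (norm y)^2"
      proof -
        have "(r^2 * qf A y) * (norm y)^2 = qf A y * (r^2 * (norm y)^2)" by (simp only: mult_ac)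
        thus ?thesis using n by simp
      qed
      also have "\<dots> \<le> qf A x * (norm y)^2" using h by (rule mult_right_mono) simp
      finally show ?thesis .
    qed
    thus ?thesis by (simp add: cinner_self)
  qed
  have Mpos: "qf A x > 0"
  proof -
    have "qf A u0 = (1 / norm v0)^2 * qf A v0" unfolding u0_def by (rule qf_scale_real)
    also have "\<dots> > 0" using q0 v0n by simp
    finally show ?thesis using xmax[OF u0S] by linarith
  qed
  have "A *v x = complex_of_real (qf A x) *s x"
    by (rule eig_from_max[OF hA Winv _ xW nx mx]) (auto intro: Wp_comb)
  thus ?thesis using xW nx Mpos by blast
qed

lemma Wp_insert: "Wp (insert u B) = {v \<in> Wp B. cinner u v = 0}"
  unfolding Wp_def by auto

lemma Wp_add: "u \<in> Wp B \<Longrightarrow> v \<in> Wp B \<Longrightarrow> u + v \<in> Wp B"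
  using Wp_comb[of u B v 1] by simp

lemma fixed_unit: assumes Jc: "\<And>b. b \<in> B \<Longrightarrow> Jmap b \<in> B" and zW: "z \<in> Wp B" and z0: "z \<noteq> 0"
  shows "\<exists>u\<in>Wp B. Jmap u = u \<and> cinner u u = 1"
proof -
  obtain u0 where u0: "u0 \<in> Wp B" "Jmap u0 = u0" "u0 \<noteq> 0"
  proof (cases "z + Jmap z = 0")
    case False
    show ?thesis
      by (rule that[of "z + Jmap z"]) (use False zW Wp_J[OF Jc zW] in \<open>auto simp: Wp_add Jmap_add\<close>)
  next
    case True
    hence Jz: "Jmap z = - z" by (simp add: add_eq_0_iff)
    have "z - Jmap z = z + z" using Jz by simp
    also have "\<dots> \<noteq> 0" using z0 by (simp add: vec_eq_iff)
    finally have nz: "z - Jmap z \<noteq> 0" .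
    show ?thesis
    proof (rule that[of "\<i> *s (z - Jmap z)"])
      show "\<i> *s (z - Jmap z) \<in> Wp B" using zW Wp_J[OF Jc zW] by (intro Wp_scale Wp_diff)
      show "Jmap (\<i> *s (z - Jmap z)) = \<i> *s (z - Jmap z)"
        by (simp add: Jmap_scale Jmap_diff vec_eq_iff algebra_simps)
      show "\<i> *s (z - Jmap z) \<noteq> 0" using nz by (simp add: vec_eq_iff)
    qed
  qed
  define u where "u = complex_of_real (1 / norm u0) *s u0"
  have "u \<in> Wp B" unfolding u_def using u0 by (simp add: Wp_scale)
  moreover have "Jmap u = u" unfolding u_def using u0 by (simp add: Jmap_scale)
  moreover have "cinner u u = 1" unfolding norm_eq_1_cinner[symmetric] u_def
    using norm_scale_real[of "1 / norm u0" u0] u0 by simp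
  ultimately show ?thesis by blast
qed

lemma cinner_comb: "cinner (u + a *s w) (u + b *s w) = cinner u u + b * cinner u w + cnj a * cinner w u + cnj a * b * cinner w w"
  by (simp add: cinner_add_left cinner_add_right cinner_scale_left cinner_scale_right algebra_simps)

lemma kernel_pair:
  assumes Jc: "\<And>b. b \<in> B \<Longrightarrow> Jmap b \<in> B"
   and big: "\<And>w. \<exists>v\<in>Wp B. v \<notin> vec.span {w}"
  shows "\<exists>x\<in>Wp B. cinner x x = 1 \<and> cinner x (Jmap x) = 0"
proof -
  obtain v where v: "v \<in> Wp B" "v \<notin> vec.span {0}" using big by blast
  hence "v \<noteq> 0" using vec.span_zero by auto
  then obtain u where u: "u \<in> Wp B" "Jmap u = u" "cinner u u = 1" using fixed_unit[OF Jc v(1)] by blast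
  have Jc': "\<And>b. b \<in> insert u B \<Longrightarrow> Jmap b \<in> insert u B" using Jc u by auto
  obtain v' where v': "v' \<in> Wp B" "v' \<notin> vec.span {u}" using big by blast
  define z where "z = v' - cinner u v' *s u"
  have zW: "z \<in> Wp (insert u B)" unfolding Wp_insert z_def using v' u
    by (simp add: Wp_diff Wp_scale cinner_diff_right cinner_scale_right)
  have "z \<noteq> 0"
  proof
    assume "z = 0"
    hence "v' = cinner u v' *s u" unfolding z_def by simp
    also have "\<dots> \<in> vec.span {u}" by (intro vec.span_scale vec.span_base) simp
    finally show False using v' by simp
  qed
  then obtain w where w: "w \<in> Wp (insert u B)" "Jmap w = w" "cinner w w = 1"
    using fixed_unit[OF Jc' zW] by blast
  have wW: "w \<in> Wp B" and uw: "cinner u w = 0" using w(1) unfolding Wp_insert by auto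
  have wu: "cinner w u = 0" using uw cinner_commute[of w u] by simp
  define c where "c = complex_of_real (1 / sqrt 2)"
  define x where "x = c *s (u + \<i> *s w)"
  have cc: "cnj c * c = 1/2" unfolding c_def
    by (simp flip: of_real_mult)
  have cc': "c * cnj c = 1/2" using cc by (simp add: mult.commute)
  have Jx: "Jmap x = c *s (u + (- \<i>) *s w)" unfolding x_def c_def
    by (simp add: Jmap_scale Jmap_add u w)
  have "x \<in> Wp B" unfolding x_def using u wW by (intro Wp_scale Wp_comb)
  moreover have "cinner x x = 1" unfolding x_def cinner_scale_left cinner_scale_right cinner_comb
    using u w uw wu by (simp add: mult.assoc[symmetric] cc cc')
  moreover have "cinner x (Jmap x) = 0" unfolding Jx unfolding x_def cinner_scale_left cinner_scale_right cinner_comb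
    using u w uw wu by (simp add: mult.assoc[symmetric] cc cc')
  ultimately show ?thesis by blast
qed

lemma card_sum_n: "CARD('n::finite + 'n) = 2 * CARD('n)"
proof -
  have "CARD('n + 'n) = card ((UNIV::'n set) <+> (UNIV::'n set))" by (simp only: UNIV_Plus_UNIV)
  also have "\<dots> = 2 * CARD('n)" by (simp add: card_Plus)
  finally show ?thesis .
qed

lemma sum_delta_cinner:
  assumes "finite S" "v0 \<in> S" "\<And>v. v \<in> S \<Longrightarrow> v \<noteq> v0 \<Longrightarrow> cinner v0 v = 0"
  shows "cinner v0 (\<Sum>v\<in>S. c v *s v) = c v0 * cinner v0 v0"
proof -
  have "cinner v0 (\<Sum>v\<in>S. c v *s v) = (\<Sum>v\<in>S. c v * cinner v0 v)"
    using assms(1) by (simp add: cinner_sum_right cinner_scale_right)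
  also have "\<dots> = (\<Sum>v\<in>S. if v = v0 then c v0 * cinner v0 v0 else 0)"
    using assms(3) by (intro sum.cong) auto
  also have "\<dots> = c v0 * cinner v0 v0" using assms(1,2) by (simp add: sum.delta)
  finally show ?thesis .
qed

lemma ON_indep:
  assumes fin: "finite S" and orth: "\<And>u v. u \<in> S \<Longrightarrow> v \<in> S \<Longrightarrow> u \<noteq> v \<Longrightarrow> cinner u v = 0"
    and nz: "0 \<notin> S"
  shows "vec.independent S"
proof
  assume "vec.dependent S"
  then obtain c v0 where v0: "v0 \<in> S" "c v0 \<noteq> 0" and s: "(\<Sum>v\<in>S. c v *s v) = 0"
    unfolding vec.dependent_finite[OF fin] by blast
  have "cinner v0 (\<Sum>v\<in>S. c v *s v) = c v0 * cinner v0 v0"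
    by (rule sum_delta_cinner[OF fin v0(1)]) (use orth v0 in auto)
  hence "c v0 * cinner v0 v0 = 0" using s by simp
  moreover have "cinner v0 v0 \<noteq> 0" using nz v0 by (auto simp: cinner_self_eq_0)
  ultimately show False using v0 by simp
qed

lemma ON_expand:
  assumes fin: "finite S" and on: "\<And>u v. u \<in> S \<Longrightarrow> v \<in> S \<Longrightarrow> cinner u v = (if u = v then 1 else 0)"
    and y: "y \<in> vec.span S"
  shows "y = (\<Sum>b\<in>S. cinner b y *s b)"
proof -
  obtain c where yc: "y = (\<Sum>v\<in>S. c v *s v)" using y unfolding vec.span_finite[OF fin] by blast
  have "cinner b y = c b" if "b \<in> S" for b
    unfolding yc by (subst sum_delta_cinner[OF fin that]) (use on that in auto)
  hence "(\<Sum>b\<in>S. cinner b y *s b) = (\<Sum>b\<in>S. c b *s b)" by (intro sum.cong) auto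
  thus ?thesis using yc by simp
qed

lemma proj_Wp:
  assumes fin: "finite S" and on: "\<And>u v. u \<in> S \<Longrightarrow> v \<in> S \<Longrightarrow> cinner u v = (if u = v then 1 else 0)"
  shows "v - (\<Sum>b\<in>S. cinner b v *s b) \<in> Wp S"
  unfolding Wp_def
proof safe
  fix b0 assume b0: "b0 \<in> S"
  have "cinner b0 (\<Sum>b\<in>S. cinner b v *s b) = cinner b0 v * cinner b0 b0"
    by (rule sum_delta_cinner[OF fin b0]) (use on b0 in auto)
  thus "cinner b0 (v - (\<Sum>b\<in>S. cinner b v *s b)) = 0"
    using on[OF b0 b0] by (simp add: cinner_diff_right)
qed

definition Pst :: "complex^('n::finite+'n)^('n+'n) \<Rightarrow> nat \<Rightarrow> (nat \<Rightarrow> complex^('n+'n)) \<Rightarrow> bool" where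
 "Pst A m x \<longleftrightarrow> (\<forall>i<m. \<exists>\<mu>::real. \<mu> \<le> 0 \<and> A *v x i = complex_of_real \<mu> *s x i)
    \<and> (\<forall>i<m. \<forall>j<m. cinner (x i) (x j) = (if i = j then 1 else 0) \<and> cinner (x i) (Jmap (x j)) = 0)"

lemma eig_Jmap: assumes aJ: "\<And>x. A *v Jmap x = - Jmap (A *v x)" and e: "A *v v = complex_of_real \<mu> *s v"
  shows "A *v Jmap v = complex_of_real (- \<mu>) *s Jmap v"
proof -
  have "A *v Jmap v = - (complex_of_real \<mu> *s Jmap v)" using e by (simp add: aJ Jmap_scale)
  thus ?thesis by (simp add: vec_eq_iff)
qed

lemma Pst_step:
  fixes A :: "complex^('n::finite+'n)^('n+'n)"
  assumes hA: "hermitian_mat A" and aJ: "\<And>x. A *v Jmap x = - Jmap (A *v x)"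
    and P: "Pst A m x" and mN: "m < CARD('n)"
  shows "\<exists>x'. Pst A (Suc m) x'"
proof -
  define B where "B = x ` {..<m} \<union> (\<lambda>i. Jmap (x i)) ` {..<m}"
  have finB: "finite B" unfolding B_def by simp
  have cardB: "card B \<le> 2 * m" unfolding B_def
    by (rule order.trans[OF card_Un_le]) (use card_image_le[of "{..<m}" x] card_image_le[of "{..<m}" "\<lambda>i. Jmap (x i)"] in simp)
  have Jc: "Jmap b \<in> B" if "b \<in> B" for b using that unfolding B_def by auto
  have eigx: "\<exists>\<mu>::real. \<mu> \<le> 0 \<and> A *v x i = complex_of_real \<mu> *s x i" if "i < m" for i
    using P that unfolding Pst_def by blast
  have eigB: "\<exists>\<mu>::real. A *v b = complex_of_real \<mu> *s b" if "b \<in> B" for b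
  proof -
    from that obtain i where i: "i < m" "b = x i \<or> b = Jmap (x i)" unfolding B_def by auto
    then obtain \<mu> :: real where mu: "A *v x i = complex_of_real \<mu> *s x i" using eigx by blast
    show ?thesis using i(2) eig_Jmap[OF aJ mu] mu by blast
  qed
  have c1: "cinner (x i) (x j) = (if i = j then 1 else 0)" and c2: "cinner (x i) (Jmap (x j)) = 0"
    if "i < m" "j < m" for i j using P that unfolding Pst_def by auto
  have c3: "cinner (Jmap (x i)) (x j) = 0" if "i < m" "j < m" for i j
    using c2[OF that(2,1)] cinner_commute[of "Jmap (x i)" "x j"] by simp
  have c4: "cinner (Jmap (x i)) (Jmap (x j)) = (if i = j then 1 else 0)" if "i < m" "j < m" for i j
    using c1[OF that(2,1)] by (simp add: cinner_Jmap)
  have onB: "cinner b b' = (if b = b' then 1 else 0)" if "b \<in> B" "b' \<in> B" for b b'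
  proof (cases "b = b'")
    case True
    from that obtain i where i: "i < m" "b = x i \<or> b = Jmap (x i)" unfolding B_def by auto
    then show ?thesis using True c1[OF i(1) i(1)] c4[OF i(1) i(1)] by auto
  next
    case False
    from that obtain i where i: "i < m" "b = x i \<or> b = Jmap (x i)" unfolding B_def by auto
    from that obtain j where j: "j < m" "b' = x j \<or> b' = Jmap (x j)" unfolding B_def by auto
    show ?thesis using False i j c1[OF i(1) j(1)] c2[OF i(1) j(1)] c3[OF i(1) j(1)] c4[OF i(1) j(1)]
      by (cases "i = j") auto
  qed
  define W where "W = Wp B"
  have Winv: "A *v v \<in> W" if "v \<in> W" for v using Wp_A[OF hA eigB] that unfolding W_def by blast
  have WJ: "Jmap v \<in> W" if "v \<in> W" for v using Wp_J[OF Jc] that unfolding W_def by blast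
  have big: "\<exists>v\<in>Wp B. v \<notin> vec.span {w}" for w
  proof (rule ccontr)
    assume "\<not> ?thesis"
    hence sub: "Wp B \<subseteq> vec.span {w}" by auto
    have "v \<in> vec.span (insert w B)" for v
    proof -
      have "v = (v - (\<Sum>b\<in>B. cinner b v *s b)) + (\<Sum>b\<in>B. cinner b v *s b)" by simp
      moreover have p: "v - (\<Sum>b\<in>B. cinner b v *s b) \<in> vec.span (insert w B)"
        using proj_Wp[OF finB onB, of v] sub vec.span_mono[of "{w}" "insert w B"] by auto
      moreover have q: "(\<Sum>b\<in>B. cinner b v *s b) \<in> vec.span (insert w B)"
        by (intro vec.span_sum vec.span_scale vec.span_base) auto
      ultimately show ?thesis using vec.span_add[OF p q] by simp
    qed
    hence "UNIV \<subseteq> vec.span (insert w B)" by auto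
    hence "vec.dim (UNIV :: (complex^('n+'n)) set) \<le> card (insert w B)"
      using finB by (intro vec.dim_le_card) auto
    also have "\<dots> \<le> 2 * m + 1" using cardB finB by (simp add: card_insert_if)
    finally have "vec.dim (UNIV :: (complex^('n+'n)) set) \<le> 2 * m + 1" .
    hence "2 * CARD('n) \<le> 2 * m + 1" by (simp only: vec_dim_card card_sum_n)
    thus False using mN by simp
  qed
  obtain xn where xnW: "xn \<in> W" and xnn: "cinner xn xn = 1" and xnJ: "cinner xn (Jmap xn) = 0"
    and xne: "\<exists>\<mu>::real. \<mu> \<le> 0 \<and> A *v xn = complex_of_real \<mu> *s xn"
  proof (cases "\<exists>v\<in>W. qf A v \<noteq> 0")
    case True
    then obtain v where v: "v \<in> W" "qf A v \<noteq> 0" by blast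
    obtain v' where v': "v' \<in> W" "qf A v' > 0"
    proof (cases "qf A v > 0")
      case True then show ?thesis using that v by blast
    next
      case False
      hence "qf A (Jmap v) > 0" using v qf_Jmap[OF hA aJ] by simp
      then show ?thesis using that WJ[OF v(1)] by blast
    qed
    obtain x0 M where x0: "x0 \<in> W" "cinner x0 x0 = 1" "M > 0" and ex0: "A *v x0 = complex_of_real M *s x0"
      using exists_pos_eig[OF hA Winv[unfolded W_def] v'[unfolded W_def]] unfolding W_def by blast
    have eJ: "A *v Jmap x0 = complex_of_real (- M) *s Jmap x0" by (rule eig_Jmap[OF aJ ex0])
    have "complex_of_real M * cinner (Jmap x0) x0 = cinner (Jmap x0) (A *v x0)"
      by (simp add: ex0 cinner_scale_right)
    also have "\<dots> = cinner (A *v Jmap x0) x0" by (rule cinner_herm[OF hA, symmetric])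
    also have "\<dots> = - complex_of_real M * cinner (Jmap x0) x0" by (simp add: eJ cinner_scale_left cinner_neg_left)
    finally have "2 * complex_of_real M * cinner (Jmap x0) x0 = 0" by simp
    hence orth: "cinner (Jmap x0) x0 = 0" using x0(3) by simp
    show ?thesis
    proof (rule that[of "Jmap x0"])
      show "Jmap x0 \<in> W" using WJ x0 by simp
      show "cinner (Jmap x0) (Jmap x0) = 1" using x0 by (simp add: cinner_Jmap)
      show "cinner (Jmap x0) (Jmap (Jmap x0)) = 0" using orth by simp
      show "\<exists>\<mu>::real. \<mu> \<le> 0 \<and> A *v Jmap x0 = complex_of_real \<mu> *s Jmap x0"
        using eJ x0(3) by (intro exI[of _ "- M"]) simp
    qed
  next
    case False
    hence q0: "qf A v = 0" if "v \<in> W" for v using that by blast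
    have ker: "A *v v = 0" if vW: "v \<in> W" for v
    proof -
      have AvW: "A *v v \<in> W" by (rule Winv[OF vW])
      have s: "v + A *v v \<in> W" using vW AvW unfolding W_def by (rule Wp_add)
      have "0 = cinner (v + A *v v) (A *v (v + A *v v))"
        using herm_real[OF hA, of "v + A *v v"] q0[OF s] by simp
      also have "\<dots> = cinner v (A *v v) + cinner v (A *v (A *v v)) + cinner (A *v v) (A *v v)
           + cinner (A *v v) (A *v (A *v v))"
        by (simp add: vec.add cinner_add_left cinner_add_right)
      also have "cinner v (A *v (A *v v)) = cinner (A *v v) (A *v v)"
        by (rule cinner_herm[OF hA, symmetric])
      also have "cinner v (A *v v) = 0" using herm_real[OF hA, of v] q0[OF vW] by simp
      also have "cinner (A *v v) (A *v (A *v v)) = 0" using herm_real[OF hA, of "A *v v"] q0[OF AvW] by simp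
      finally have "2 * cinner (A *v v) (A *v v) = 0" by simp
      thus ?thesis by (simp add: cinner_self_eq_0)
    qed
    obtain xk where xk: "xk \<in> Wp B" "cinner xk xk = 1" "cinner xk (Jmap xk) = 0"
      using kernel_pair[OF Jc big] by blast
    show ?thesis
    proof (rule that[of xk])
      show "\<exists>\<mu>::real. \<mu> \<le> 0 \<and> A *v xk = complex_of_real \<mu> *s xk"
        using ker[of xk] xk(1) unfolding W_def by (intro exI[of _ 0]) simp
    qed (use xk in \<open>auto simp: W_def\<close>)
  qed
  have xnJW: "Jmap xn \<in> W" using WJ xnW by simp
  have d1: "cinner (x i) xn = 0" if "i < m" for i using xnW that unfolding W_def Wp_def B_def by auto
  have d2: "cinner (Jmap (x i)) xn = 0" if "i < m" for i using xnW that unfolding W_def Wp_def B_def by auto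
  have d3: "cinner (x i) (Jmap xn) = 0" if "i < m" for i using xnJW that unfolding W_def Wp_def B_def by auto
  have d1': "cinner xn (x i) = 0" if "i < m" for i using d1[OF that] cinner_commute[of xn "x i"] by simp
  have d2': "cinner xn (Jmap (x i)) = 0" if "i < m" for i using d2[OF that] cinner_commute[of xn "Jmap (x i)"] by simp
  define x' where "x' = x(m := xn)"
  have "Pst A (Suc m) x'"
    unfolding Pst_def
  proof (intro conjI allI impI)
    fix i assume i: "i < Suc m"
    show "\<exists>\<mu>::real. \<mu> \<le> 0 \<and> A *v x' i = complex_of_real \<mu> *s x' i"
      using xne eigx i unfolding x'_def by (cases "i = m") auto
  next
    fix i j assume i: "i < Suc m" and j: "j < Suc m"
    show "cinner (x' i) (x' j) = (if i = j then 1 else 0)"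
      using i j c1 d1 d1' xnn unfolding x'_def by (cases "i = m"; cases "j = m") auto
    show "cinner (x' i) (Jmap (x' j)) = 0"
      using i j c2 d3 d2' xnJ unfolding x'_def by (cases "i = m"; cases "j = m") auto
  qed
  thus ?thesis by blast
qed

lemma Pst_exists:
  fixes A :: "complex^('n::finite+'n)^('n+'n)"
  assumes hA: "hermitian_mat A" and aJ: "\<And>x. A *v Jmap x = - Jmap (A *v x)"
  shows "m \<le> CARD('n) \<Longrightarrow> \<exists>x. Pst A m x"
proof (induction m)
  case 0 show ?case unfolding Pst_def by simp
next
  case (Suc m)
  then obtain x where "Pst A m x" by auto
  thus ?case using Pst_step[OF hA aJ] Suc.prems by auto
qed

lemma basis_part:
  fixes A :: "complex^('n::finite+'n)^('n+'n)"
  assumes hA: "hermitian_mat A" and aJ: "\<And>x. A *v Jmap x = - Jmap (A *v x)"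
  shows "\<exists>x::'n \<Rightarrow> complex^('n+'n). (\<forall>j. \<exists>\<mu>::real. \<mu> \<le> 0 \<and> A *v x j = complex_of_real \<mu> *s x j)
     \<and> (\<forall>j j'. cinner (x j) (x j') = (if j = j' then 1 else 0) \<and> cinner (x j) (Jmap (x j')) = 0)"
proof -
  obtain xs where P: "Pst A CARD('n) xs" using Pst_exists[OF hA aJ] by blast
  obtain h where h: "bij_betw h {0..<CARD('n)} (UNIV::'n set)"
    using ex_bij_betw_nat_finite[of "UNIV::'n set"] by auto
  define g where "g = inv_into {0..<CARD('n)} h"
  have g: "bij_betw g UNIV {0..<CARD('n)}" unfolding g_def by (rule bij_betw_inv_into[OF h])
  have gN: "g j < CARD('n)" for j using g by (auto simp: bij_betw_def)
  have ginj: "g j = g j' \<longleftrightarrow> j = j'" for j j' using g by (auto simp: bij_betw_def inj_on_def)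
  show ?thesis
    by (rule exI[of _ "\<lambda>j. xs (g j)"]) (use P gN ginj in \<open>auto simp: Pst_def\<close>)
qed

definition bfun :: "('n \<Rightarrow> complex^('n::finite+'n)) \<Rightarrow> 'n + 'n \<Rightarrow> complex^('n+'n)" where
  "bfun x p = (case p of Inl j \<Rightarrow> x j | Inr j \<Rightarrow> Jmap (x j))"

lemma bfun_simps[simp]: "bfun x (Inl j) = x j" "bfun x (Inr j) = Jmap (x j)"
  unfolding bfun_def by simp_all

lemma bfun_on:
  assumes on: "\<forall>j j'. cinner (x j) (x j') = (if j = j' then 1 else 0) \<and> cinner (x j) (Jmap (x j')) = 0"
  shows "cinner (bfun x p) (bfun x q) = (if p = q then 1 else 0)"
proof (cases p; cases q)
  fix j j' assume "p = Inl j" "q = Inl j'" thus ?thesis using on by simp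
next
  fix j j' assume "p = Inl j" "q = Inr j'" thus ?thesis using on by simp
next
  fix j j' assume "p = Inr j" "q = Inl j'" thus ?thesis using on cinner_commute[of "Jmap (x j)" "x j'"] by simp
next
  fix j j' assume "p = Inr j" "q = Inr j'" thus ?thesis using on by (simp add: cinner_Jmap)
qed

lemma bfun_inj:
  assumes on: "\<forall>j j'. cinner (x j) (x j') = (if j = j' then 1 else 0) \<and> cinner (x j) (Jmap (x j')) = 0"
  shows "inj (bfun x)"
proof (rule injI)
  fix p q assume "bfun x p = bfun x q"
  hence "cinner (bfun x p) (bfun x q) = 1" using bfun_on[OF on, of p p] by simp
  thus "p = q" using bfun_on[OF on, of p q] by (auto split: if_splits)
qed

lemma bfun_on_set:
  assumes on: "\<forall>j j'. cinner (x j) (x j') = (if j = j' then 1 else 0) \<and> cinner (x j) (Jmap (x j')) = 0"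
  shows "\<And>u v. u \<in> range (bfun x) \<Longrightarrow> v \<in> range (bfun x) \<Longrightarrow> cinner u v = (if u = v then 1 else 0)"
  using bfun_on[OF on] bfun_inj[OF on] by (auto simp: inj_eq)

lemma bfun_span:
  assumes on: "\<forall>j j'. cinner (x j) (x j') = (if j = j' then 1 else 0) \<and> cinner (x j) (Jmap (x j')) = 0"
  shows "vec.span (range (bfun x)) = UNIV"
proof -
  have ind: "vec.independent (range (bfun x))"
  proof (rule ON_indep)
    show "finite (range (bfun x))" by simp
    show "\<And>u v. u \<in> range (bfun x) \<Longrightarrow> v \<in> range (bfun x) \<Longrightarrow> u \<noteq> v \<Longrightarrow> cinner u v = 0"
      using bfun_on_set[OF on] by auto
    show "0 \<notin> range (bfun x)" using bfun_on_set[OF on] by fastforce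
  qed
  have "card (range (bfun x)) = CARD('a + 'a)" using bfun_inj[OF on] by (simp add: card_image)
  hence "vec.dim (UNIV :: (complex^('a+'a)) set) \<le> card (range (bfun x))" by (simp only: vec_dim_card)
  hence "UNIV \<subseteq> vec.span (range (bfun x))" by (intro vec.card_ge_dim_independent ind) auto
  thus ?thesis by auto
qed

lemma bfun_eig:
  assumes aJ: "\<And>x. A *v Jmap x = - Jmap (A *v x)"
    and ev: "\<forall>j. \<exists>\<mu>::real. \<mu> \<le> 0 \<and> A *v x j = complex_of_real \<mu> *s x j"
  shows "\<exists>\<mu>::real. A *v bfun x p = complex_of_real \<mu> *s bfun x p"
proof (cases p)
  case (Inl j) thus ?thesis using ev by auto
next
  case (Inr j)
  then obtain \<mu> :: real where "A *v x j = complex_of_real \<mu> *s x j" using ev by auto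
  hence "A *v Jmap (x j) = complex_of_real (- \<mu>) *s Jmap (x j)" by (rule eig_Jmap[OF aJ])
  thus ?thesis using Inr by (intro exI[of _ "- \<mu>"]) simp
qed

lemma cinner_2comb: "cinner (a *s p + b *s q) (c *s r + d *s s) =
   cnj a * c * cinner p r + cnj a * d * cinner p s + cnj b * c * cinner q r + cnj b * d * cinner q s"
  by (simp add: cinner_add_left cinner_add_right cinner_scale_left cinner_scale_right algebra_simps)

lemma y_part:
  fixes K :: "(complex^('n::finite+'n)) set"
  assumes Ksub: "vec.subspace K" and KJ: "\<And>v. v \<in> K \<Longrightarrow> Jmap v \<in> K"
    and kpK: "\<And>i. i < l \<Longrightarrow> kp i \<in> K"
    and on1: "\<And>i i'. i < l \<Longrightarrow> i' < l \<Longrightarrow> cinner (kp i) (kp i') = (if i = i' then 1 else 0)"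
    and on2: "\<And>i i'. i < l \<Longrightarrow> i' < l \<Longrightarrow> cinner (kp i) (Jmap (kp i')) = 0"
    and spK: "vec.span ((\<lambda>k. if k < l then kp k else Jmap (kp (k - l))) ` {..<2 * l}) = K"
  shows "\<exists>y :: nat \<Rightarrow> complex ^ ('n + 'n).
              (\<forall>k < 2 * l. y k \<in> K \<and> y k \<noteq> 0 \<and> Jmap (y k) = y k)
            \<and> (\<forall>j < 2 * l. \<forall>k < 2 * l. j \<noteq> k \<longrightarrow> cinner (y j) (y k) = 0)
            \<and> vec.independent (y ` {..<2 * l})
            \<and> vec.span (y ` {..<2 * l}) = K"
proof -
  define \<alpha> where "\<alpha> k = (if even k then 1 else \<i>)" for k :: nat
  define \<beta> where "\<beta> k = (if even k then 1 else - \<i>)" for k :: nat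
  define y where "y k = \<alpha> k *s kp (k div 2) + \<beta> k *s Jmap (kp (k div 2))" for k
  have on3: "cinner (Jmap (kp i)) (kp i') = 0" if "i < l" "i' < l" for i i'
    using on2[OF that(2,1)] cinner_commute[of "Jmap (kp i)" "kp i'"] by simp
  have on4: "cinner (Jmap (kp i)) (Jmap (kp i')) = (if i = i' then 1 else 0)" if "i < l" "i' < l" for i i'
    using on1[OF that(2,1)] by (simp add: cinner_Jmap)
  have cy: "cinner (y j) (y k) = (if j div 2 = k div 2 then cnj (\<alpha> j) * \<alpha> k + cnj (\<beta> j) * \<beta> k else 0)"
    if "j < 2 * l" "k < 2 * l" for j k
  proof -
    have jl: "j div 2 < l" and kl: "k div 2 < l" using that by auto
    show ?thesis unfolding y_def cinner_2comb
      using on1[OF jl kl] on2[OF jl kl] on3[OF jl kl] on4[OF jl kl] by auto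
  qed
  have yK: "y k \<in> K" if "k < 2 * l" for k
  proof -
    have kl: "k div 2 < l" using that by auto
    show ?thesis unfolding y_def using kpK[OF kl] KJ[OF kpK[OF kl]] Ksub
      by (intro vec.subspace_add vec.subspace_scale) auto
  qed
  have yy: "cinner (y k) (y k) = 2" if "k < 2 * l" for k
    using cy[OF that that] unfolding \<alpha>_def \<beta>_def by auto
  have y0: "y k \<noteq> 0" if "k < 2 * l" for k using yy[OF that] by auto
  have yJ: "Jmap (y k) = y k" for k
    unfolding y_def \<alpha>_def \<beta>_def by (simp add: Jmap_add Jmap_scale add.commute)
  have yorth: "cinner (y j) (y k) = 0" if "j < 2 * l" "k < 2 * l" "j \<noteq> k" for j k
  proof (cases "j div 2 = k div 2")
    case True
    hence "even j \<noteq> even k" using that(3) by (metis div_mult_mod_eq even_iff_mod_2_eq_zero odd_iff_mod_2_eq_one)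
    thus ?thesis using cy[OF that(1,2)] True unfolding \<alpha>_def \<beta>_def by auto
  next
    case False thus ?thesis using cy[OF that(1,2)] by simp
  qed
  have ind: "vec.independent (y ` {..<2 * l})"
  proof (rule ON_indep)
    show "finite (y ` {..<2 * l})" by simp
    show "\<And>u v. u \<in> y ` {..<2 * l} \<Longrightarrow> v \<in> y ` {..<2 * l} \<Longrightarrow> u \<noteq> v \<Longrightarrow> cinner u v = 0"
      using yorth by auto
    show "0 \<notin> y ` {..<2 * l}" using y0 by auto
  qed
  have sub1: "vec.span (y ` {..<2 * l}) \<subseteq> K"
    by (rule vec.span_minimal) (use yK Ksub in auto)
  have sub2: "K \<subseteq> vec.span (y ` {..<2 * l})"
  proof -
    have "(\<lambda>k. if k < l then kp k else Jmap (kp (k - l))) ` {..<2 * l} \<subseteq> vec.span (y ` {..<2 * l})"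
    proof safe
      fix k assume k: "k < 2 * l"
      define i where "i = (if k < l then k else k - l)"
      have il: "i < l" using k unfolding i_def by auto
      have y1: "y (2 * i) \<in> vec.span (y ` {..<2 * l})" using il by (intro vec.span_base) auto
      have y2: "y (2 * i + 1) \<in> vec.span (y ` {..<2 * l})" using il by (intro vec.span_base) auto
      have e1: "kp i = (1/2) *s (y (2 * i) - \<i> *s y (2 * i + 1))"
        unfolding y_def \<alpha>_def \<beta>_def by (simp add: vec_eq_iff algebra_simps)
      have e2: "Jmap (kp i) = (1/2) *s (y (2 * i) + \<i> *s y (2 * i + 1))"
        unfolding y_def \<alpha>_def \<beta>_def by (simp add: vec_eq_iff algebra_simps)
      have "kp i \<in> vec.span (y ` {..<2 * l})" unfolding e1
        by (intro vec.span_scale vec.span_diff y1 y2)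
      moreover have "Jmap (kp i) \<in> vec.span (y ` {..<2 * l})" unfolding e2
        by (intro vec.span_scale vec.span_add y1 y2)
      ultimately show "(if k < l then kp k else Jmap (kp (k - l))) \<in> vec.span (y ` {..<2 * l})"
        unfolding i_def by (auto split: if_splits)
    qed
    hence "vec.span ((\<lambda>k. if k < l then kp k else Jmap (kp (k - l))) ` {..<2 * l}) \<subseteq> vec.span (y ` {..<2 * l})"
      by (intro vec.span_minimal) auto
    thus ?thesis using spK by simp
  qed
  show ?thesis
    by (rule exI[of _ y]) (use yK y0 yJ yorth ind sub1 sub2 in auto)
qed

lemma ker_subspace: "vec.subspace (ker_mat A)"
  unfolding vec.subspace_def ker_mat_def by (simp add: vec.add vec.scale)

lemma ker_J: assumes aJ: "\<And>x. A *v Jmap x = - Jmap (A *v x)" shows "Jmap v \<in> ker_mat A \<longleftrightarrow> v \<in> ker_mat A"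
  unfolding ker_mat_def by (simp add: aJ)

lemma kernel_part:
  fixes A :: "complex^('n::finite+'n)^('n+'n)" and x :: "'n \<Rightarrow> complex^('n+'n)"
  assumes hA: "hermitian_mat A" and aJ: "\<And>x. A *v Jmap x = - Jmap (A *v x)"
    and ev: "\<forall>j. \<exists>\<mu>::real. \<mu> \<le> 0 \<and> A *v x j = complex_of_real \<mu> *s x j"
    and on: "\<forall>j j'. cinner (x j) (x j') = (if j = j' then 1 else 0) \<and> cinner (x j) (Jmap (x j')) = 0"
  shows "\<exists>l::nat. vec.dim (ker_mat A) = 2 * l
        \<and> (\<exists>y :: nat \<Rightarrow> complex ^ ('n + 'n).
              (\<forall>k < 2 * l. y k \<in> ker_mat A \<and> y k \<noteq> 0 \<and> Jmap (y k) = y k)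
            \<and> (\<forall>j < 2 * l. \<forall>k < 2 * l. j \<noteq> k \<longrightarrow> cinner (y j) (y k) = 0)
            \<and> vec.independent (y ` {..<2 * l})
            \<and> vec.span (y ` {..<2 * l}) = ker_mat A)
        \<and> (\<exists>kp :: nat \<Rightarrow> complex ^ ('n + 'n).
             let b = (\<lambda>k. if k < l then kp k else Jmap (kp (k - l))) in
              (\<forall>k < 2 * l. b k \<in> ker_mat A)
            \<and> (\<forall>j < 2 * l. \<forall>k < 2 * l. cinner (b j) (b k) = (if j = k then 1 else 0))
            \<and> vec.span (b ` {..<2 * l}) = ker_mat A)"
proof -
  define K where "K = ker_mat A"
  define Z where "Z = {j. A *v x j = 0}"
  define l where "l = card Z"
  obtain e where e: "bij_betw e {0..<l} Z" unfolding l_def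
    using ex_bij_betw_nat_finite[of Z] by auto
  have eZ: "e k \<in> Z" if "k < l" for k using e that by (auto simp: bij_betw_def)
  have einj: "e k = e k' \<longleftrightarrow> k = k'" if "k < l" "k' < l" for k k'
    using e that by (auto simp: bij_betw_def inj_on_def)
  have esurj: "\<exists>k<l. e k = j" if "j \<in> Z" for j
    using e that by (auto simp: bij_betw_def image_iff)
  define kp where "kp k = x (e k)" for k
  define bk where "bk = (\<lambda>k. if k < l then kp k else Jmap (kp (k - l)))"
  define \<iota> where "\<iota> k = (if k < l then Inl (e k) else Inr (e (k - l)))" for k
  have bk_eq: "bk k = bfun x (\<iota> k)" for k unfolding bk_def \<iota>_def kp_def by simp
  have \<iota>inj: "\<iota> j = \<iota> k \<longleftrightarrow> j = k" if "j < 2 * l" "k < 2 * l" for j k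
    using that einj unfolding \<iota>_def by auto
  have onbk: "cinner (bk j) (bk k) = (if j = k then 1 else 0)" if "j < 2 * l" "k < 2 * l" for j k
    unfolding bk_eq bfun_on[OF on] using \<iota>inj[OF that] by simp
  have Kx: "x j \<in> K \<longleftrightarrow> j \<in> Z" for j unfolding K_def ker_mat_def Z_def by simp
  have bkK: "bk k \<in> K" if "k < 2 * l" for k
    unfolding bk_def kp_def K_def using eZ that Kx ker_J[OF aJ] unfolding K_def by auto
  have Ksub: "vec.subspace K" unfolding K_def by (rule ker_subspace)
  have spK: "vec.span (bk ` {..<2 * l}) = K"
  proof
    show "vec.span (bk ` {..<2 * l}) \<subseteq> K" by (rule vec.span_minimal) (use bkK Ksub in auto)
  next
    show "K \<subseteq> vec.span (bk ` {..<2 * l})"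
    proof
      fix v assume vK: "v \<in> K"
      have fin: "finite (range (bfun x))" by simp
      have vsp: "v \<in> vec.span (range (bfun x))" using bfun_span[OF on] by simp
      have vexp: "v = (\<Sum>t\<in>range (bfun x). cinner t v *s t)"
        by (rule ON_expand[OF fin bfun_on_set[OF on] vsp])
      have "cinner t v *s t \<in> vec.span (bk ` {..<2 * l})" if "t \<in> range (bfun x)" for t
      proof (cases "A *v t = 0")
        case True
        from that obtain p where p: "t = bfun x p" by auto
        have "t \<in> bk ` {..<2 * l}"
        proof (cases p)
          case (Inl j)
          hence "j \<in> Z" using True p Z_def by simp
          then obtain k where k: "k < l" "e k = j" using esurj by blast
          hence "bk k = t" unfolding bk_def kp_def using p Inl by simp
          thus ?thesis using k by force
        next
          case (Inr j)
          hence "Jmap (x j) \<in> K" using True p unfolding K_def ker_mat_def by simp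
          hence "j \<in> Z" using ker_J[OF aJ] Kx K_def by simp
          then obtain k where k: "k < l" "e k = j" using esurj by blast
          hence "bk (k + l) = t" unfolding bk_def kp_def using p Inr by simp
          thus ?thesis using k by (intro image_eqI[of _ _ "k + l"]) auto
        qed
        thus ?thesis by (intro vec.span_scale vec.span_base)
      next
        case False
        from that obtain p where p: "t = bfun x p" by auto
        obtain \<mu> :: real where mu: "A *v t = complex_of_real \<mu> *s t"
          using bfun_eig[OF aJ ev, of p] p by blast
        have "\<mu> \<noteq> 0" using mu False by auto
        have "complex_of_real \<mu> * cinner t v = cinner (A *v t) v" by (simp add: mu cinner_scale_left)
        also have "\<dots> = cinner t (A *v v)" by (rule cinner_herm[OF hA])
        also have "\<dots> = 0" using vK unfolding K_def ker_mat_def by simp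
        finally have "cinner t v = 0" using \<open>\<mu> \<noteq> 0\<close> by simp
        thus ?thesis by (simp add: vec.span_zero)
      qed
      hence "(\<Sum>t\<in>range (bfun x). cinner t v *s t) \<in> vec.span (bk ` {..<2 * l})"
        by (intro vec.span_sum) auto
      thus "v \<in> vec.span (bk ` {..<2 * l})" using vexp by simp
    qed
  qed
  have bkinj: "inj_on bk {..<2 * l}"
  proof (rule inj_onI)
    fix j k assume j: "j \<in> {..<2 * l}" and k: "k \<in> {..<2 * l}" and eq: "bk j = bk k"
    have "cinner (bk j) (bk k) = 1" using eq onbk[of k k] k by simp
    thus "j = k" using onbk[of j k] j k by (auto split: if_splits)
  qed
  have indbk: "vec.independent (bk ` {..<2 * l})"
  proof (rule ON_indep)
    show "finite (bk ` {..<2 * l})" by simp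
    show "\<And>u v. u \<in> bk ` {..<2 * l} \<Longrightarrow> v \<in> bk ` {..<2 * l} \<Longrightarrow> u \<noteq> v \<Longrightarrow> cinner u v = 0"
      using onbk by auto
    show "0 \<notin> bk ` {..<2 * l}" using onbk by fastforce
  qed
  have dimK: "vec.dim K = 2 * l"
  proof -
    have "vec.dim K = card (bk ` {..<2 * l})" unfolding spK[symmetric]
      by (rule vec.dim_span_eq_card_independent[OF indbk])
    also have "\<dots> = 2 * l" using bkinj by (simp add: card_image)
    finally show ?thesis .
  qed
  have kpK: "kp i \<in> K" if "i < l" for i using bkK[of i] that unfolding bk_def by simp
  have on1: "cinner (kp i) (kp i') = (if i = i' then 1 else 0)" if "i < l" "i' < l" for i i'
    using onbk[of i i'] that unfolding bk_def by simp
  have on2: "cinner (kp i) (Jmap (kp i')) = 0" if "i < l" "i' < l" for i i'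
    using on that unfolding kp_def by simp
  have KJ: "Jmap v \<in> K" if "v \<in> K" for v using that ker_J[OF aJ] unfolding K_def by simp
  obtain y where y: "(\<forall>k < 2 * l. y k \<in> K \<and> y k \<noteq> 0 \<and> Jmap (y k) = y k)
            \<and> (\<forall>j < 2 * l. \<forall>k < 2 * l. j \<noteq> k \<longrightarrow> cinner (y j) (y k) = 0)
            \<and> vec.independent (y ` {..<2 * l})
            \<and> vec.span (y ` {..<2 * l}) = K"
    using y_part[OF Ksub KJ kpK on1 on2 spK[unfolded bk_def]] by blast
  show ?thesis
    apply (rule exI[of _ l])
    apply (intro conjI)
      apply (simp add: dimK[unfolded K_def])
     apply (rule exI[of _ y]) using y apply (simp add: K_def)
    apply (rule exI[of _ kp])
    unfolding Let_def using bkK onbk spK unfolding bk_def K_def by auto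
qed

theorem mainTheorem8:
  fixes H :: "complex ^ ('n::finite + 'n) ^ ('n + 'n)"
  assumes "hermitian_mat H"
  shows "(\<forall>x \<in> ker_mat (minus_part H). Jmap x \<in> ker_mat (minus_part H))
    \<and> (\<exists>l::nat. vec.dim (ker_mat (minus_part H)) = 2 * l
        \<and> (\<exists>y :: nat \<Rightarrow> complex ^ ('n + 'n).
              (\<forall>k < 2 * l. y k \<in> ker_mat (minus_part H) \<and> y k \<noteq> 0 \<and> Jmap (y k) = y k)
            \<and> (\<forall>j < 2 * l. \<forall>k < 2 * l. j \<noteq> k \<longrightarrow> cinner (y j) (y k) = 0)
            \<and> vec.independent (y ` {..<2 * l})
            \<and> vec.span (y ` {..<2 * l}) = ker_mat (minus_part H))
        \<and> (\<exists>kp :: nat \<Rightarrow> complex ^ ('n + 'n).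
             let b = (\<lambda>k. if k < l then kp k else Jmap (kp (k - l))) in
              (\<forall>k < 2 * l. b k \<in> ker_mat (minus_part H))
            \<and> (\<forall>j < 2 * l. \<forall>k < 2 * l. cinner (b j) (b k) = (if j = k then 1 else 0))
            \<and> vec.span (b ` {..<2 * l}) = ker_mat (minus_part H)))
    \<and> (\<exists>x :: 'n \<Rightarrow> complex ^ ('n + 'n).
         let b = (\<lambda>p. case p of Inl j \<Rightarrow> x j | Inr j \<Rightarrow> Jmap (x j)) in
           (\<forall>p q. cinner (b p) (b q) = (if p = q then 1 else 0))
         \<and> vec.span (range b) = UNIV
         \<and> (\<forall>p. \<exists>\<mu>::complex. minus_part H *v b p = \<mu> *s b p)
         \<and> (\<forall>j. \<exists>\<mu>::real. \<mu> \<le> 0 \<and> minus_part H *v x j = complex_of_real \<mu> *s x j))"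
proof -
  let ?A = "minus_part H"
  have hA: "hermitian_mat ?A" by (rule herm_minus_part[OF assms])
  have aJ: "\<And>x. ?A *v Jmap x = - Jmap (?A *v x)" by (rule minus_part_Jmap[OF assms])
  obtain x :: "'n \<Rightarrow> complex^('n+'n)" where
    ev: "\<forall>j. \<exists>\<mu>::real. \<mu> \<le> 0 \<and> ?A *v x j = complex_of_real \<mu> *s x j" and
    on: "\<forall>j j'. cinner (x j) (x j') = (if j = j' then 1 else 0) \<and> cinner (x j) (Jmap (x j')) = 0"
    using basis_part[OF hA aJ] by blast
  have c1: "\<forall>x \<in> ker_mat ?A. Jmap x \<in> ker_mat ?A" using ker_J[OF aJ] by blast
  note c2 = kernel_part[OF hA aJ ev on]
  have bx: "(\<lambda>p. case p of Inl j \<Rightarrow> x j | Inr j \<Rightarrow> Jmap (x j)) = bfun x"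
    by (rule ext) (simp add: bfun_def)
  have eigc: "\<forall>p. \<exists>\<mu>::complex. ?A *v bfun x p = \<mu> *s bfun x p"
    using bfun_eig[OF aJ ev] by blast
  have c3: "\<exists>x :: 'n \<Rightarrow> complex ^ ('n + 'n).
         let b = (\<lambda>p. case p of Inl j \<Rightarrow> x j | Inr j \<Rightarrow> Jmap (x j)) in
           (\<forall>p q. cinner (b p) (b q) = (if p = q then 1 else 0))
         \<and> vec.span (range b) = UNIV
         \<and> (\<forall>p. \<exists>\<mu>::complex. ?A *v b p = \<mu> *s b p)
         \<and> (\<forall>j. \<exists>\<mu>::real. \<mu> \<le> 0 \<and> ?A *v x j = complex_of_real \<mu> *s x j)"
    apply (rule exI[of _ x])
    unfolding Let_def bx using bfun_on[OF on] bfun_span[OF on] eigc ev by blast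
  show ?thesis using c1 c2 c3 by blast
qed

end
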